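(* Let $W=I_2(m)$, $m\ge3$. Writing $X^{(m)}_{\alpha\ldots}=\sum_{w\in W}q_w\delta_w$ with $q_w\in\mathcal{Q}$, the coefficient $c^{(m-2)}_{\alpha,\beta}$ of $\delta^{(m-2)}_{\alpha\ldots}$ equals $$c^{(m-2)}_{\alpha,\beta}=\begin{cases}\ \ \upsilon^{(2)}_\alpha\,S^{(0,m-2)}_\alpha(y_\alpha y_\beta),& m\text{ even},\\ -\upsilon^{(2)}_\alpha\,S^{(0,m-2)}_\alpha(y_\alpha y_\beta),& m\text{ odd}.\end{cases}$$ Symmetrically (interchanging $\alpha$ and $\beta$), the coefficient $c^{(m-2)}_{\beta,\alpha}$ of $\delta^{(m-2)}_{\beta\ldots}$ in $X^{(m)}_{\beta\ldots}$ is given by the same formula with $\alpha$ and $\beta$ interchanged.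
   Context: General setup: $W$ a finite real reflection group with root system $\Sigma$; $R$ an integral domain containing the ring $\mathcal{R}\subset\mathbb{R}$ generated by the coefficients of roots in the basis of simple roots; $F$ a one-dimensional commutative formal group law over $R$; $\mathcal{S}$ the formal root algebra (the quotient of the completed polynomial ring $R[[x_\lambda:\lambda\in\Lambda]]$, $\Lambda$ the lattice spanned by $\mathcal{R}$-multiples of roots, by the closed ideal generated by $x_0$ and the relations $x_{e_i\gamma+e_j\gamma'}=(e_ix_\gamma)+_F(e_jx_{\gamma'})$ for roots $\gamma,\gamma'$ and a fixed $\mathbb{Z}$-basis $(e_1=1,\dots,e_l)$ of $\mathcal{R}$), with $W$ acting by $w(x_\lambda)=x_{w(\lambda)}$; $\mathcal{Q}$ its localization at all $x_\gamma$; $\mathcal{Q}_W=\mathcal{Q}\otimes_RR[W]$ with left $\mathcal{Q}$-basis $\{\delta_w\}$ and product $(q\delta_w)(q'\delta_{w'})=q\,w(q')\delta_{ww'}$, $\mathbf 1=\delta_1$; $\delta_\gamma=\delta_{s_\gamma}$, $X_\gamma=\frac1{x_\gamma}(\mathbf 1-\delta_\gamma)$. Dihedral notation: $W=I_2(m)$, simple roots $\alpha,\beta$; $y_\gamma=1/x_\gamma\in\mathcal{Q}$; $W$ acts on products multiplicatively, e.g. $s(y_\alpha y_\beta)=s(y_\alpha)s(y_\beta)$, $s(y_\gamma)=y_{s(\gamma)}$. $X^{(i)}_{\alpha\ldots}=X_\alpha X_\beta X_\alpha\cdots$ ($i$ alternating factors), $X^{(i)}_{\beta\ldots}$, $\delta^{(i)}_{\alpha\ldots}=\delta_\alpha\delta_\beta\cdots$,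 $\delta^{(i)}_{\beta\ldots}$, $s^{(i)}_{\alpha\ldots}=s_\alpha s_\beta\cdots$, $s^{(i)}_{\beta\ldots}$ ($i$ factors; $i=0$ gives $\mathbf 1$ / identity). $\omega_j=\alpha$ for $j$ even, $\omega_j=\beta$ for $j$ odd. For $0\le i\le m-1$: $\upsilon^{(i)}_\alpha=\prod_{j=0}^{m-i-1}s^{(j)}_{\alpha\ldots}(y_{\omega_j})$ and $\upsilon^{(i)}_\beta=\prod_{j=0}^{m-i-1}s^{(j)}_{\beta\ldots}(y_{\omega_{j+1}})$ (empty product $=1$). For $i\le j$: $S^{(i,j)}_\alpha(u)=\sum_{k=i}^js^{(k)}_{\alpha\ldots}(u)$, $S^{(i,j)}_\beta(u)=\sum_{k=i}^js^{(k)}_{\beta\ldots}(u)$; an empty range ($j<i$) gives $0$. *)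

theory Defs
  imports "HOL-Analysis.Analysis"
begin

text \<open>The Euclidean plane is modelled by the type complex (a real inner product space).
  Reflection in the hyperplane orthogonal to a nonzero vector g.\<close>
definition rrefl :: "'a::real_inner \<Rightarrow> 'a \<Rightarrow> 'a" where
  "rrefl g v = v - (2 * (v \<bullet> g) / (g \<bullet> g)) *\<^sub>R g"

text \<open>Simple roots of I_2(m): unit vectors with angle pi - pi/m between them.\<close>
definition alpha :: complex where
  "alpha = 1"

definition beta :: "nat \<Rightarrow> complex" where
  "beta m = cis (pi - pi / real m)"

inductive_set refl_group :: "'a::real_inner set \<Rightarrow> ('a \<Rightarrow> 'a) set" for gens where
  id_in: "id \<in> refl_group gens"
| step: "a \<in> gens \<Longrightarrow> w \<in> refl_group gens \<Longrightarrow> rrefl a \<circ> w \<in> refl_group gens"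

definition root_sys :: "'a::real_inner set \<Rightarrow> 'a set" where
  "root_sys gens = {w a | w a. w \<in> refl_group gens \<and> a \<in> gens}"

definition Wdih :: "nat \<Rightarrow> (complex \<Rightarrow> complex) set" where
  "Wdih m = refl_group {alpha, beta m}"

definition Sigma :: "nat \<Rightarrow> complex set" where
  "Sigma m = root_sys {alpha, beta m}"

fun salt :: "'a::real_inner \<Rightarrow> 'a \<Rightarrow> nat \<Rightarrow> ('a \<Rightarrow> 'a)" where
  "salt a b 0 = id"
| "salt a b (Suc i) = rrefl a \<circ> salt b a i"

text \<open>An element sum_w q_w delta_w of Q_W is represented by its coefficient function
  w \<mapsto> q_w (supported on W).  Here act w is the action of w on Q.
  Product: (q delta_v)(q' delta_w) = q v(q') delta_{vw}.\<close>
definition qw_mult ::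
  "('b \<Rightarrow> 'b) set \<Rightarrow> (('b \<Rightarrow> 'b) \<Rightarrow> 'q::comm_ring_1 \<Rightarrow> 'q)
     \<Rightarrow> (('b \<Rightarrow> 'b) \<Rightarrow> 'q) \<Rightarrow> (('b \<Rightarrow> 'b) \<Rightarrow> 'q) \<Rightarrow> (('b \<Rightarrow> 'b) \<Rightarrow> 'q)" where
  "qw_mult W act f g = (\<lambda>u. \<Sum>(v, w) \<in> {(v, w). v \<in> W \<and> w \<in> W \<and> v \<circ> w = u}. f v * act v (g w))"

definition qw_delta :: "('b \<Rightarrow> 'b) \<Rightarrow> (('b \<Rightarrow> 'b) \<Rightarrow> 'q::comm_ring_1)" where
  "qw_delta w = (\<lambda>u. if u = w then 1 else 0)"

text \<open>X_g = y_g (1 - delta_g), with y_g = 1/x_g.\<close>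
definition qw_X :: "('b::real_inner \<Rightarrow> 'q::comm_ring_1) \<Rightarrow> 'b \<Rightarrow> (('b \<Rightarrow> 'b) \<Rightarrow> 'q)" where
  "qw_X y g = (\<lambda>u. y g * (qw_delta id u - qw_delta (rrefl g) u))"

fun Xalt ::
  "('b::real_inner \<Rightarrow> 'b) set \<Rightarrow> (('b \<Rightarrow> 'b) \<Rightarrow> 'q::comm_ring_1 \<Rightarrow> 'q) \<Rightarrow> ('b \<Rightarrow> 'q)
     \<Rightarrow> 'b \<Rightarrow> 'b \<Rightarrow> nat \<Rightarrow> (('b \<Rightarrow> 'b) \<Rightarrow> 'q)" where
  "Xalt W act y a b 0 = qw_delta id"
| "Xalt W act y a b (Suc i) = qw_mult W act (qw_X y a) (Xalt W act y b a i)"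

definition upsilon ::
  "(('b::real_inner \<Rightarrow> 'b) \<Rightarrow> 'q::comm_ring_1 \<Rightarrow> 'q) \<Rightarrow> ('b \<Rightarrow> 'q) \<Rightarrow> 'b \<Rightarrow> 'b \<Rightarrow> nat \<Rightarrow> nat \<Rightarrow> 'q" where
  "upsilon act y a b m i = (\<Prod>j\<in>{0..<m - i}. act (salt a b j) (y (if even j then a else b)))"

definition Ssum ::
  "(('b::real_inner \<Rightarrow> 'b) \<Rightarrow> 'q::comm_ring_1 \<Rightarrow> 'q) \<Rightarrow> 'b \<Rightarrow> 'b \<Rightarrow> nat \<Rightarrow> nat \<Rightarrow> 'q \<Rightarrow> 'q" where
  "Ssum act a b i j u = (\<Sum>k\<in>{i..j}. act (salt a b k) u)"

end

theory Submission
  imports Defs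
begin


lemma rrefl_unit: "cmod g = 1 \<Longrightarrow> rrefl g v = - (g^2) * cnj v"
proof -
  assume h: "cmod g = 1"
  have gg: "g \<bullet> g = 1" using h by (simp add: power2_norm_eq_inner[symmetric])
  have n: "(Re g)^2 + (Im g)^2 = 1" using h by (simp add: cmod_def)
  hence e: "Re g * Re g = 1 - Im g * Im g" by (simp add: power2_eq_square)
  show ?thesis unfolding rrefl_def gg
    apply (simp add: complex_eq_iff inner_complex_def power2_eq_square algebra_simps scaleR_conv_of_real)
    using n by algebra
qed

lemma unit_alpha: "cmod alpha = 1" by (simp add: alpha_def)
lemma unit_beta: "cmod (beta m) = 1" by (simp add: beta_def)

lemma beta_pow_ne1:
  assumes "0 < i" "i < m"
  shows "beta m ^ (2*i) \<noteq> 1"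
proof
  assume h: "beta m ^ (2*i) = 1"
  have "beta m ^ (2*i) = cis (real (2*i) * (pi - pi / real m))" unfolding beta_def by (rule Complex.DeMoivre)
  hence "exp (\<i> * complex_of_real (real (2*i) * (pi - pi / real m))) = 1"
    using h by (simp add: cis_conv_exp)
  then obtain n :: int where n: "real (2*i) * (pi - pi / real m) = of_int (2*n) * pi"
    unfolding exp_eq_1 by auto
  have mpos: "real m > 0" using assms by simp
  have "2*pi*(real i - real i / real m) = 2*pi*(of_int n)" using n by (simp add: algebra_simps)
  hence "real i - real i / real m = of_int n" by simp
  hence k: "real i / real m = of_int (int i - n)" by simp
  have "0 < real i / real m" "real i / real m < 1" using assms mpos by auto
  with k have "0 < int i - n" "int i - n < 1" by linarith+
  thus False by simp
qed

lemma beta_pow_2m: "0 < m \<Longrightarrow> beta m ^ (2*m) = 1"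
proof -
  assume m: "0 < m"
  have "beta m ^ (2*m) = cis (real (2*m) * (pi - pi / real m))" unfolding beta_def by (rule Complex.DeMoivre)
  also have "real (2*m) * (pi - pi / real m) = 2 * pi * real (m - 1)" using m
    by (simp add: field_simps of_nat_diff)
  also have "cis \<dots> = 1" by (rule cis_multiple_2pi) simp
  finally show ?thesis .
qed

definition pairab :: "nat \<Rightarrow> complex \<Rightarrow> complex \<Rightarrow> bool" where
  "pairab m a b \<longleftrightarrow> (a = alpha \<and> b = beta m) \<or> (a = beta m \<and> b = alpha)"

lemma pairab_sym: "pairab m a b \<Longrightarrow> pairab m b a" by (auto simp: pairab_def)
lemma pairab_unit: "pairab m a b \<Longrightarrow> cmod a = 1 \<and> cmod b = 1"
  by (auto simp: pairab_def unit_alpha unit_beta)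

lemma rrefl_sq: "cmod a = 1 \<Longrightarrow> rrefl a (rrefl a z) = z"
proof -
  assume h: "cmod a = 1"
  have c: "a * cnj a = 1" using h complex_norm_square[of a] by simp
  have "rrefl a (rrefl a z) = (a * cnj a)^2 * z" using h by (simp add: rrefl_unit power_mult_distrib)
  thus ?thesis using c by simp
qed

lemma salt_even: "cmod a = 1 \<Longrightarrow> cmod b = 1 \<Longrightarrow> salt a b (2*i) = (\<lambda>z. (a^2 * cnj (b^2))^i * z)"
proof (induction i)
  case 0 thus ?case by (auto simp: id_def)
next
  case (Suc i)
  have e: "2 * Suc i = Suc (Suc (2*i))" by simp
  show ?case unfolding e salt.simps Suc.IH[OF Suc.prems] using Suc.prems
    by (auto simp: rrefl_unit fun_eq_iff algebra_simps)
qed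

lemma salt_odd: "cmod a = 1 \<Longrightarrow> cmod b = 1 \<Longrightarrow>
   salt a b (Suc (2*i)) = (\<lambda>z. (- (a^2) * cnj ((b^2 * cnj (a^2))^i)) * cnj z)"
  by (auto simp: salt_even rrefl_unit fun_eq_iff)

lemma refl_not_id: "(\<lambda>z. c * cnj z) \<noteq> id"
proof
  assume h: "(\<lambda>z. c * cnj z) = id"
  have "c = 1" using fun_cong[OF h, of 1] by simp
  moreover have "c * cnj \<i> = \<i>" using fun_cong[OF h, of \<i>] by simp
  ultimately show False by (simp add: complex_eq_iff)
qed

lemma rot_ne1: assumes "pairab m a b" "0 < i" "i < m" shows "(a^2 * cnj (b^2))^i \<noteq> 1"
proof -
  have ne: "beta m ^ (2*i) \<noteq> 1" using beta_pow_ne1 assms(2,3) .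
  from assms(1) consider "a = alpha" "b = beta m" | "a = beta m" "b = alpha" unfolding pairab_def by auto
  thus ?thesis
  proof cases
    case 1
    have "(a^2 * cnj (b^2))^i = cnj (beta m ^ (2*i))" using 1 by (simp add: alpha_def power_mult)
    thus ?thesis using ne by (metis complex_cnj_cnj complex_cnj_one)
  next
    case 2
    have "(a^2 * cnj (b^2))^i = beta m ^ (2*i)" using 2 by (simp add: alpha_def power_mult)
    thus ?thesis using ne by simp
  qed
qed

lemma salt_ne_id: assumes "pairab m a b" "0 < j" "j < 2*m" shows "salt a b j \<noteq> id"
proof -
  have u: "cmod a = 1" "cmod b = 1" using pairab_unit[OF assms(1)] by auto
  consider i where "j = 2*i" | i where "j = Suc (2*i)" by (cases "even j") (auto elim!: evenE oddE)
  thus ?thesis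
  proof cases
    case 1
    show ?thesis
    proof
      assume h: "salt a b j = id"
      have "(a^2 * cnj (b^2))^i = 1" using fun_cong[OF h, of 1] unfolding 1 salt_even[OF u] by simp
      moreover have "0 < i" "i < m" using 1 assms by auto
      ultimately show False using rot_ne1[OF assms(1)] by blast
    qed
  next
    case 2
    show ?thesis unfolding 2 salt_odd[OF u] by (rule refl_not_id)
  qed
qed

lemma refl_group_sub:
  assumes "\<And>a. a \<in> gens \<Longrightarrow> cmod a = 1 \<and> a^(2*m) = 1"
  shows "refl_group gens \<subseteq> (\<lambda>c z. c * z) ` {c. c^(2*m) = 1} \<union> (\<lambda>c z. c * cnj z) ` {c. c^(2*m) = 1}"
proof
  fix w assume "w \<in> refl_group gens"
  thus "w \<in> (\<lambda>c z. c * z) ` {c. c^(2*m) = 1} \<union> (\<lambda>c z. c * cnj z) ` {c. c^(2*m) = 1}"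
  proof (induction rule: refl_group.induct)
    case id_in
    have "id = (\<lambda>z::complex. 1 * z)" by (simp add: fun_eq_iff)
    moreover have "(1::complex)^(2*m) = 1" by simp
    ultimately show ?case by (metis (mono_tags, lifting) UnI1 image_eqI mem_Collect_eq)
  next
    case (step a w)
    have a: "cmod a = 1" "a^(2*m) = 1" using assms step.hyps(1) by auto
    have p: "(- (a^2) * cnj c)^(2*m) = 1" if "c^(2*m) = 1" for c
    proof -
      have "(- (a^2) * cnj c)^(2*m) = ((-1)^m)^2 * (a^(2*m))^2 * cnj (c^(2*m))"
        by (simp add: power_mult_distrib power_mult[symmetric] mult.commute)
      moreover have "((-1::complex)^m)^2 = 1" by (simp add: power2_eq_square power_mult_distrib[symmetric])
      ultimately show ?thesis using a that by simp
    qed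
    from step.IH show ?case
    proof
      assume "w \<in> (\<lambda>c z. c * z) ` {c. c^(2*m) = 1}"
      then obtain c where c: "c^(2*m) = 1" "w = (\<lambda>z. c * z)" by auto
      have "rrefl a \<circ> w = (\<lambda>z. (- (a^2) * cnj c) * cnj z)" using a c by (auto simp: rrefl_unit)
      thus ?case using p[OF c(1)] by blast
    next
      assume "w \<in> (\<lambda>c z. c * cnj z) ` {c. c^(2*m) = 1}"
      then obtain c where c: "c^(2*m) = 1" "w = (\<lambda>z. c * cnj z)" by auto
      have "rrefl a \<circ> w = (\<lambda>z. (- (a^2) * cnj c) * z)" using a c by (auto simp: rrefl_unit)
      thus ?case using p[OF c(1)] by blast
    qed
  qed
qed

lemma finite_Wdih: "0 < m \<Longrightarrow> finite (Wdih m)"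
proof -
  assume m: "0 < m"
  have "Wdih m \<subseteq> (\<lambda>c z. c * z) ` {c. c^(2*m) = 1} \<union> (\<lambda>c z. c * cnj z) ` {c. c^(2*m) = 1}"
    unfolding Wdih_def
    by (rule refl_group_sub) (auto simp: unit_alpha unit_beta alpha_def beta_pow_2m[OF m])
  moreover have "finite {c::complex. c^(2*m) = 1}" by (rule finite_roots_unity) (use m in simp)
  ultimately show ?thesis by (meson finite_Un finite_imageI finite_subset)
qed



locale dih =
  fixes m :: nat
    and act :: "(complex \<Rightarrow> complex) \<Rightarrow> 'q::comm_ring_1 \<Rightarrow> 'q"
    and y :: "complex \<Rightarrow> 'q"
  assumes m3: "m \<ge> 3"
    and act_id: "act id = id"
    and act_comp: "\<And>v w. v \<in> Wdih m \<Longrightarrow> w \<in> Wdih m \<Longrightarrow> act (v \<circ> w) = act v \<circ> act w"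
    and act_add: "\<And>w p q. w \<in> Wdih m \<Longrightarrow> act w (p + q) = act w p + act w q"
    and act_mult: "\<And>w p q. w \<in> Wdih m \<Longrightarrow> act w (p * q) = act w p * act w q"
    and act_one: "\<And>w. w \<in> Wdih m \<Longrightarrow> act w 1 = 1"
begin

declare salt.simps(2)[simp del] Xalt.simps(2)[simp del]

abbreviation "W \<equiv> Wdih m"
abbreviation "c n a b u \<equiv> Xalt W act y a b n u"

lemma finW: "finite W" using finite_Wdih m3 by simp

lemma sW: "pairab m a b \<Longrightarrow> u \<in> W \<Longrightarrow> rrefl a \<circ> u \<in> W"
  unfolding Wdih_def by (rule refl_group.step) (auto simp: pairab_def)

lemma idW: "id \<in> W" unfolding Wdih_def by (rule refl_group.id_in)

lemma rW: "pairab m a b \<Longrightarrow> rrefl a \<in> W"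
  using sW[OF _ idW] by simp

lemma saltW: "pairab m a b \<Longrightarrow> salt a b j \<in> W"
proof (induction j arbitrary: a b)
  case 0 show ?case by (simp only: salt.simps idW)
next
  case (Suc j) show ?case unfolding salt.simps
    by (rule sW[OF Suc.prems Suc.IH[OF pairab_sym[OF Suc.prems]]])
qed

lemma sq: "pairab m a b \<Longrightarrow> rrefl a \<circ> (rrefl a \<circ> u) = u"
  using pairab_unit rrefl_sq by (auto simp: fun_eq_iff)

lemma s_ne_id: "pairab m a b \<Longrightarrow> rrefl a \<noteq> id"
  using salt_ne_id[of m a b 1] m3 by (simp add: salt.simps(2))

lemma act_zero: "w \<in> W \<Longrightarrow> act w 0 = 0"
  using act_add[of w 0 0] by simp

lemma act_neg: "w \<in> W \<Longrightarrow> act w (- p) = - act w p"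
proof -
  assume w: "w \<in> W"
  have "act w p + act w (-p) = 0" using act_add[OF w, of p "-p"] act_zero[OF w] by simp
  from minus_unique[OF this] show ?thesis by simp
qed

lemma act_diff: "w \<in> W \<Longrightarrow> act w (p - q) = act w p - act w q"
  using act_add[of w p "-q"] act_neg[of w q] by simp

lemma act_prod: "w \<in> W \<Longrightarrow> act w (\<Prod>j\<in>A. f j) = (\<Prod>j\<in>A. act w (f j))"
  by (induction A rule: infinite_finite_induct) (auto simp: act_one act_mult)

lemma act_sum: "w \<in> W \<Longrightarrow> act w (\<Sum>j\<in>A. f j) = (\<Sum>j\<in>A. act w (f j))"
  by (induction A rule: infinite_finite_induct) (auto simp: act_zero act_add)

lemma rec: assumes p: "pairab m a b" and u: "u \<in> W"
  shows "c (Suc n) a b u = y a * (c n b a u - act (rrefl a) (c n b a (rrefl a \<circ> u)))"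
proof -
  let ?S = "{(v, w). v \<in> W \<and> w \<in> W \<and> v \<circ> w = u}"
  let ?f = "\<lambda>(v, w). qw_X y a v * act v (c n b a w)"
  let ?T = "{(id, u), (rrefl a, rrefl a \<circ> u)}"
  have fin: "finite ?S" by (rule finite_subset[of _ "W \<times> W"]) (auto simp: finW)
  have TS: "?T \<subseteq> ?S" using idW rW[OF p] sW[OF p u] sq[OF p] u by auto
  have z: "\<forall>x \<in> ?S - ?T. ?f x = 0"
  proof
    fix x assume x: "x \<in> ?S - ?T"
    then obtain v w where vw: "x = (v, w)" "v \<circ> w = u" by auto
    have "v \<noteq> id"
    proof
      assume "v = id" thus False using x vw by auto
    qed
    moreover have "v \<noteq> rrefl a"
    proof
      assume h: "v = rrefl a"
      hence "w = rrefl a \<circ> u" using vw sq[OF p, of w] by auto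
      thus False using x vw h by auto
    qed
    ultimately show "?f x = 0" using vw by (simp add: qw_X_def qw_delta_def)
  qed
  have "sum ?f ?S = sum ?f ?T"
    by (rule sum.mono_neutral_right[OF fin TS z])
  also have "\<dots> = ?f (id, u) + ?f (rrefl a, rrefl a \<circ> u)"
    using s_ne_id[OF p] by (simp add: Pair_inject)
  also have "\<dots> = y a * (c n b a u - act (rrefl a) (c n b a (rrefl a \<circ> u)))"
    using s_ne_id[OF p] by (simp add: qw_X_def qw_delta_def act_id algebra_simps)
  finally show ?thesis by (simp add: qw_mult_def Xalt.simps(2))
qed

definition Pp :: "nat \<Rightarrow> complex \<Rightarrow> complex \<Rightarrow> 'q" where
  "Pp r a b = (\<Prod>j\<in>{0..<r}. act (salt a b j) (y (if even j then a else b)))"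

definition Ss :: "nat \<Rightarrow> complex \<Rightarrow> complex \<Rightarrow> 'q" where
  "Ss r a b = (\<Sum>k\<in>{0..r}. act (salt a b k) (y a * y b))"

lemma act_salt_Suc: "pairab m a b \<Longrightarrow> act (salt a b (Suc j)) x = act (rrefl a) (act (salt b a j) x)"
  using act_comp[OF rW saltW[OF pairab_sym]] by (simp add: salt.simps(2))

lemma PS: assumes p: "pairab m a b" shows "Pp (Suc n) a b = y a * act (rrefl a) (Pp n b a)"
proof -
  have ifeq: "\<And>j. (if even (Suc j) then a else b) = (if even j then b else a)" by simp
  have "Pp (Suc n) a b = act (salt a b 0) (y a) *
      (\<Prod>j<n. act (salt a b (Suc j)) (y (if even (Suc j) then a else b)))"
    unfolding Pp_def atLeast0LessThan by (simp only: prod.lessThan_Suc_shift) simp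
  also have "\<dots> = y a * (\<Prod>j<n. act (rrefl a) (act (salt b a j) (y (if even j then b else a))))"
    unfolding ifeq act_salt_Suc[OF p] by (simp add: act_id)
  also have "\<dots> = y a * act (rrefl a) (Pp n b a)"
    unfolding Pp_def atLeast0LessThan by (simp add: act_prod[OF rW[OF p]])
  finally show ?thesis .
qed

lemma SS: assumes p: "pairab m a b" shows "Ss (Suc n) a b = y a * y b + act (rrefl a) (Ss n b a)"
proof -
  have "Ss (Suc n) a b = act (salt a b 0) (y a * y b) + (\<Sum>k\<le>n. act (salt a b (Suc k)) (y a * y b))"
    unfolding Ss_def atLeast0AtMost by (simp only: sum.atMost_Suc_shift)
  also have "\<dots> = y a * y b + (\<Sum>k\<le>n. act (rrefl a) (act (salt b a k) (y b * y a)))"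
    using act_salt_Suc[OF p] by (simp add: act_id mult.commute)
  also have "\<dots> = y a * y b + act (rrefl a) (Ss n b a)"
    unfolding Ss_def atLeast0AtMost by (simp add: act_sum[OF rW[OF p]])
  finally show ?thesis .
qed

lemma act_sign: "w \<in> W \<Longrightarrow> act w ((-1)^r) = (-1)^r"
  by (induction r) (auto simp: act_one act_mult act_neg)

lemma sa_salt: "pairab m a b \<Longrightarrow> rrefl a \<circ> salt a b (Suc j) = salt b a j"
  using sq by (simp add: salt.simps(2))

lemma Z: "\<forall>a b j. pairab m a b \<longrightarrow> k < j \<longrightarrow> j + k \<le> 2*m-3 \<longrightarrow>
            c k a b (salt a b j) = 0 \<and> c k a b (salt b a j) = 0"
proof (induction k)
  case 0
  show ?case
  proof (intro allI impI)
    fix a b j assume p: "pairab m a b" and j: "0 < j" "j + 0 \<le> 2*m-3"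
    have "salt a b j \<noteq> id" "salt b a j \<noteq> id"
      using salt_ne_id[OF p j(1)] salt_ne_id[OF pairab_sym[OF p] j(1)] j(2) m3 by auto
    thus "c 0 a b (salt a b j) = 0 \<and> c 0 a b (salt b a j) = 0" by (simp add: qw_delta_def)
  qed
next
  case (Suc k)
  show ?case
  proof (intro allI impI)
    fix a b j assume p: "pairab m a b" and j: "Suc k < j" "j + Suc k \<le> 2*m-3"
    obtain j' where j': "j = Suc j'" using j(1) by (cases j) auto
    have p': "pairab m b a" using pairab_sym[OF p] .
    have "c (Suc k) a b (salt a b j) = y a * (c k b a (salt a b j) - act (rrefl a) (c k b a (salt b a j')))"
      using rec[OF p saltW[OF p]] sa_salt[OF p] j' by simp
    also have "\<dots> = 0" using Suc.IH p' j j' by (auto simp: act_zero[OF rW[OF p]])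
    finally have 1: "c (Suc k) a b (salt a b j) = 0" .
    have "c (Suc k) a b (salt b a j) = y a * (c k b a (salt b a j) - act (rrefl a) (c k b a (salt a b (Suc j))))"
      using rec[OF p saltW[OF p']] by (simp add: salt.simps(2)[symmetric])
    also have "\<dots> = 0" using Suc.IH p' j j' by (auto simp: act_zero[OF rW[OF p]])
    finally show "c (Suc k) a b (salt a b j) = 0 \<and> c (Suc k) a b (salt b a j) = 0" using 1 by simp
  qed
qed

lemma A: "pairab m a b \<Longrightarrow> n + 1 \<le> m \<Longrightarrow> c n a b (salt a b n) = (-1)^n * Pp n a b"
proof (induction n arbitrary: a b)
  case 0 thus ?case by (simp add: qw_delta_def Pp_def id_def)
next
  case (Suc n)
  have p: "pairab m a b" and p': "pairab m b a" using Suc.prems pairab_sym by auto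
  have z: "c n b a (salt a b (Suc n)) = 0" using Z[of n] p' Suc.prems(2) by auto
  have "c (Suc n) a b (salt a b (Suc n)) = y a * (0 - act (rrefl a) (c n b a (salt b a n)))"
    using rec[OF p saltW[OF p]] sa_salt[OF p] z by simp
  also have "\<dots> = y a * (0 - act (rrefl a) ((-1)^n * Pp n b a))" using Suc.IH[OF p'] Suc.prems by simp
  also have "\<dots> = (-1)^(Suc n) * (y a * act (rrefl a) (Pp n b a))"
    by (simp add: act_mult[OF rW[OF p]] act_sign[OF rW[OF p]])
  also have "\<dots> = (-1)^(Suc n) * Pp (Suc n) a b" using PS[OF p] by simp
  finally show ?case .
qed

lemma C: assumes p: "pairab m a b" and k: "k + 2 \<le> m"
  shows "c (Suc k) b a (salt a b k) = y b * ((-1)^k * Pp k a b)"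
proof -
  have p': "pairab m b a" using pairab_sym[OF p] .
  have z: "c k a b (salt b a (Suc k)) = 0" using Z[of k] p k by auto
  have "c (Suc k) b a (salt a b k) = y b * (c k a b (salt a b k) - act (rrefl b) (c k a b (salt b a (Suc k))))"
    using rec[OF p' saltW[OF p]] by (simp add: salt.simps(2)[symmetric])
  also have "\<dots> = y b * ((-1)^k * Pp k a b)" using z A[OF p] k by (simp add: act_zero[OF rW[OF p']])
  finally show ?thesis .
qed

lemma T: "pairab m a b \<Longrightarrow> r + 2 \<le> m \<Longrightarrow>
   c (Suc (Suc r)) a b (salt a b r) = (-1)^r * Pp r a b * Ss r a b"
proof (induction r arbitrary: a b)
  case 0
  have p: "pairab m a b" and p': "pairab m b a" using 0 pairab_sym by auto
  have n1: "rrefl a \<noteq> id" "rrefl b \<noteq> id" using s_ne_id p p' by auto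
  have "salt b a 2 = rrefl b \<circ> rrefl a" by (simp add: numeral_2_eq_2 salt.simps(2))
  hence n2: "rrefl b \<circ> rrefl a \<noteq> id" using salt_ne_id[OF p', of 2] m3 by simp
  have c1: "c 1 b a id = y b"
    using rec[OF p' idW, of 0] n1 by (simp add: qw_delta_def act_zero[OF rW[OF p']])
  have c2: "c 1 b a (rrefl a) = 0"
    using rec[OF p' rW[OF p], of 0] n1 n2 by (simp add: qw_delta_def act_zero[OF rW[OF p']])
  have "c 2 a b id = y a * (c 1 b a id - act (rrefl a) (c 1 b a (rrefl a)))"
    using rec[OF p idW, of 1] by (simp add: numeral_2_eq_2)
  also have "\<dots> = y a * y b" using c1 c2 by (simp add: act_zero[OF rW[OF p]])
  finally have "c 2 a b id = y a * y b" .
  moreover have "Ss 0 a b = y a * y b" unfolding Ss_def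
    by (simp only: atLeastAtMost_singleton sum.insert_if finite.emptyI empty_iff if_False sum.empty salt.simps(1) act_id id_apply add_0_right)
  moreover have "Pp 0 a b = 1" unfolding Pp_def by simp
  ultimately show ?case by (simp add: numeral_2_eq_2 id_def)
next
  case (Suc r)
  have p: "pairab m a b" and p': "pairab m b a" using Suc.prems pairab_sym by auto
  have e1: "c (Suc (Suc r)) b a (salt a b (Suc r)) = y b * ((-1)^Suc r * Pp (Suc r) a b)"
    using C[OF p] Suc.prems(2) by simp
  have e2: "c (Suc (Suc r)) b a (salt b a r) = (-1)^r * Pp r b a * Ss r b a"
    using Suc.IH[OF p'] Suc.prems(2) by simp
  have "c (Suc (Suc (Suc r))) a b (salt a b (Suc r)) =
     y a * (c (Suc (Suc r)) b a (salt a b (Suc r)) - act (rrefl a) (c (Suc (Suc r)) b a (salt b a r)))"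
    using rec[OF p saltW[OF p]] sa_salt[OF p] by simp
  also have "\<dots> = y a * (y b * ((-1)^Suc r * (y a * act (rrefl a) (Pp r b a)))
        - (-1)^r * act (rrefl a) (Pp r b a) * act (rrefl a) (Ss r b a))"
    unfolding e1 e2 PS[OF p] by (simp add: act_mult[OF rW[OF p]] act_sign[OF rW[OF p]])
  also have "\<dots> = (-1)^Suc r * (y a * act (rrefl a) (Pp r b a)) * (y a * y b + act (rrefl a) (Ss r b a))"
    by (simp add: algebra_simps)
  also have "\<dots> = (-1)^Suc r * Pp (Suc r) a b * Ss (Suc r) a b" unfolding PS[OF p] SS[OF p] ..
  finally show ?case .
qed

end

theorem lemma6p3:
  fixes m :: nat
    and act :: "(complex \<Rightarrow> complex) \<Rightarrow> 'q::comm_ring_1 \<Rightarrow> 'q"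
    and x y :: "complex \<Rightarrow> 'q"
  assumes m3: "m \<ge> 3"
    and act_id: "act id = id"
    and act_comp: "\<And>v w. v \<in> Wdih m \<Longrightarrow> w \<in> Wdih m \<Longrightarrow> act (v \<circ> w) = act v \<circ> act w"
    and act_add: "\<And>w p q. w \<in> Wdih m \<Longrightarrow> act w (p + q) = act w p + act w q"
    and act_mult: "\<And>w p q. w \<in> Wdih m \<Longrightarrow> act w (p * q) = act w p * act w q"
    and act_one: "\<And>w. w \<in> Wdih m \<Longrightarrow> act w 1 = 1"
    and act_x: "\<And>w g. w \<in> Wdih m \<Longrightarrow> g \<in> Sigma m \<Longrightarrow> act w (x g) = x (w g)"
    and xy: "\<And>g. g \<in> Sigma m \<Longrightarrow> x g * y g = 1"
  shows "(Xalt (Wdih m) act y alpha (beta m) m (salt alpha (beta m) (m - 2))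
           = (if even m then 1 else - 1)
             * upsilon act y alpha (beta m) m 2
             * Ssum act alpha (beta m) 0 (m - 2) (y alpha * y (beta m)))
       \<and> (Xalt (Wdih m) act y (beta m) alpha m (salt (beta m) alpha (m - 2))
           = (if even m then 1 else - 1)
             * upsilon act y (beta m) alpha m 2
             * Ssum act (beta m) alpha 0 (m - 2) (y (beta m) * y alpha))"
proof -
  interpret dih m act y
    using m3 act_id act_comp act_add act_mult act_one by unfold_locales auto
  have pa: "pairab m alpha (beta m)" "pairab m (beta m) alpha" by (auto simp: pairab_def)
  have r: "m - 2 + 2 \<le> m" "Suc (Suc (m - 2)) = m" using m3 by auto
  have ev: "even (m - 2) \<longleftrightarrow> even m" using m3 by simp
  have sg: "(-1::'q)^(m-2) = (if even m then 1 else -1)"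
    using ev by (simp add: minus_one_power_iff)
  have ups: "\<And>a b. upsilon act y a b m 2 = Pp (m-2) a b" by (simp add: upsilon_def Pp_def)
  have ss: "\<And>a b. Ssum act a b 0 (m-2) (y a * y b) = Ss (m-2) a b" by (simp add: Ssum_def Ss_def)
  show ?thesis using T[OF pa(1) r(1)] T[OF pa(2) r(1)] unfolding r(2) sg ups ss by simp
qed

end
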